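(* Let $|\phi_{ABC}\rangle$ be a pure three-qubit state. If at least one of the following holds: (i) $|\vec a|^2>\frac{|\vec b|^2+|\vec c|^2}{2}$ and $|\vec b|^2>\frac{|\vec a|^2+|\vec c|^2}{2}$; (ii) $|\vec a|^2>\frac{|\vec b|^2+|\vec c|^2}{2}$ and $|\vec c|^2>\frac{|\vec a|^2+|\vec b|^2}{2}$; (iii) $|\vec b|^2>\frac{|\vec a|^2+|\vec c|^2}{2}$ and $|\vec c|^2>\frac{|\vec a|^2+|\vec b|^2}{2}$, then $|\phi_{ABC}\rangle$ is genuinely tripartite entangled, i.e. it is not a product $|\chi\rangle\otimes|\eta\rangle$ with respect to any bipartition of the three qubits into one qubit versus the other two.
   Context: $\vec a,\vec b,\vec c\in\mathbb R^3$ are the Bloch vectors of the single-qubit reduced states of $|\phi_{ABC}\rangle$: $a_k=\mathrm{Tr}[\rho_A\sigma_k]$, $b_k=\mathrm{Tr}[\rho_B\sigma_k]$, $c_k=\mathrm{Tr}[\rho_C\sigma_k]$, with $\sigma_k$ the Pauli matrices. *)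

theory Defs
  imports Complex_Main
begin

text \<open>Qubit basis labels are booleans (False = |0>, True = |1>).
  A three-qubit state vector is a function psi a b c giving the amplitude
  of the basis vector |a b c> (qubits A, B, C in this order).\<close>

type_synonym qstate3 = "bool \<Rightarrow> bool \<Rightarrow> bool \<Rightarrow> complex"
type_synonym qmat = "bool \<Rightarrow> bool \<Rightarrow> complex"

definition pure_state3 :: "qstate3 \<Rightarrow> bool" where
  "pure_state3 psi \<longleftrightarrow> (\<Sum>a\<in>UNIV. \<Sum>b\<in>UNIV. \<Sum>c\<in>UNIV. (cmod (psi a b c))\<^sup>2) = 1"

definition rho_A :: "qstate3 \<Rightarrow> qmat" where
  "rho_A psi i j = (\<Sum>b\<in>UNIV. \<Sum>c\<in>UNIV. psi i b c * cnj (psi j b c))"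
definition rho_B :: "qstate3 \<Rightarrow> qmat" where
  "rho_B psi i j = (\<Sum>a\<in>UNIV. \<Sum>c\<in>UNIV. psi a i c * cnj (psi a j c))"
definition rho_C :: "qstate3 \<Rightarrow> qmat" where
  "rho_C psi i j = (\<Sum>a\<in>UNIV. \<Sum>b\<in>UNIV. psi a b i * cnj (psi a b j))"

definition pauli :: "nat \<Rightarrow> qmat" where
  "pauli k i j =
     (if k = 1 then (if i \<noteq> j then 1 else 0)
      else if k = 2 then (if i = j then 0 else if i then \<i> else - \<i>)
      else (if i \<noteq> j then 0 else if i then -1 else 1))"

definition mtrace :: "qmat \<Rightarrow> complex" where
  "mtrace M = (\<Sum>i\<in>UNIV. M i i)"

definition mmult :: "qmat \<Rightarrow> qmat \<Rightarrow> qmat" where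
  "mmult M N i j = (\<Sum>l\<in>UNIV. M i l * N l j)"

text \<open>Bloch vector components r_k = Tr[rho sigma_k] (real for Hermitian rho).\<close>
definition bloch :: "qmat \<Rightarrow> nat \<Rightarrow> real" where
  "bloch rho k = Re (mtrace (mmult rho (pauli k)))"

definition bloch_norm2 :: "qmat \<Rightarrow> real" where
  "bloch_norm2 rho = (\<Sum>k\<in>{1,2,3}. (bloch rho k)\<^sup>2)"

definition product_A_BC :: "qstate3 \<Rightarrow> bool" where
  "product_A_BC psi \<longleftrightarrow> (\<exists>chi eta. \<forall>a b c. psi a b c = chi a * eta b c)"
definition product_B_AC :: "qstate3 \<Rightarrow> bool" where
  "product_B_AC psi \<longleftrightarrow> (\<exists>chi eta. \<forall>a b c. psi a b c = chi b * eta a c)"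
definition product_C_AB :: "qstate3 \<Rightarrow> bool" where
  "product_C_AB psi \<longleftrightarrow> (\<exists>chi eta. \<forall>a b c. psi a b c = chi c * eta a b)"

definition genuinely_tripartite_entangled :: "qstate3 \<Rightarrow> bool" where
  "genuinely_tripartite_entangled psi \<longleftrightarrow>
     \<not> product_A_BC psi \<and> \<not> product_B_AC psi \<and> \<not> product_C_AB psi"

end

theory Submission imports Defs begin

lemma bloch_norm2_complex:
  assumes h: "\<And>i j. rho j i = cnj (rho i j)"
  shows "complex_of_real (bloch_norm2 rho) = (rho False False - rho True True)^2 + 4 * rho False True * rho True False"
proof -
  obtain x0 where x0: "rho False False = of_real x0"
    using h[of False False] by (metis Reals_cnj_iff Reals_cases)
  obtain x1 where x1: "rho True True = of_real x1"
    using h[of True True] by (metis Reals_cnj_iff Reals_cases)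
  obtain w where w: "rho False True = w" by blast
  have w2: "rho True False = cnj w" using h[of False True] w by simp
  show ?thesis
    unfolding bloch_norm2_def bloch_def mtrace_def mmult_def pauli_def UNIV_bool
    by (simp add: x0 x1 w w2 complex_eq_iff power2_eq_square algebra_simps)
qed

lemma rhoA_herm: "rho_A psi j i = cnj (rho_A psi i j)"
  unfolding rho_A_def by (simp add: mult.commute)
lemma rhoB_herm: "rho_B psi j i = cnj (rho_B psi i j)"
  unfolding rho_B_def by (simp add: mult.commute)
lemma rhoC_herm: "rho_C psi j i = cnj (rho_C psi i j)"
  unfolding rho_C_def by (simp add: mult.commute)

lemma cns: "(complex_of_real (cmod z))^2 = z * cnj z"
  by (metis complex_norm_square of_real_power)

lemma prodA:
  assumes pure: "pure_state3 psi" and p: "product_A_BC psi"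
  shows "bloch_norm2 (rho_A psi) = 1 \<and> bloch_norm2 (rho_B psi) = bloch_norm2 (rho_C psi)
         \<and> bloch_norm2 (rho_B psi) \<le> 1"
proof -
  obtain chi eta where ce: "\<And>a b c. psi a b c = chi a * eta b c"
    using p unfolding product_A_BC_def by blast
  define kr where "kr = (cmod (chi False))^2 + (cmod (chi True))^2"
  define er where "er = (cmod (eta False False))^2 + (cmod (eta False True))^2
     + (cmod (eta True False))^2 + (cmod (eta True True))^2"
  define d where "d = eta False False * eta True True - eta False True * eta True False"
  have ke: "kr * er = 1"
    using pure unfolding pure_state3_def UNIV_bool kr_def er_def
    by (simp add: ce norm_mult power_mult_distrib algebra_simps)
  have A: "complex_of_real (bloch_norm2 (rho_A psi)) = complex_of_real (kr^2 * er^2)"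
    unfolding bloch_norm2_complex[OF rhoA_herm]
    unfolding rho_A_def UNIV_bool kr_def er_def of_real_mult of_real_power of_real_add cns
    by (simp add: ce) algebra
  have B: "complex_of_real (bloch_norm2 (rho_B psi)) = complex_of_real (kr^2 * (er^2 - 4 * (cmod d)^2))"
    unfolding bloch_norm2_complex[OF rhoB_herm]
    unfolding rho_B_def UNIV_bool kr_def er_def of_real_mult of_real_power of_real_add of_real_diff cns
      of_real_numeral d_def
    by (simp add: ce) algebra
  have C: "complex_of_real (bloch_norm2 (rho_C psi)) = complex_of_real (kr^2 * (er^2 - 4 * (cmod d)^2))"
    unfolding bloch_norm2_complex[OF rhoC_herm]
    unfolding rho_C_def UNIV_bool kr_def er_def of_real_mult of_real_power of_real_add of_real_diff cns
      of_real_numeral d_def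
    by (simp add: ce) algebra
  have A': "bloch_norm2 (rho_A psi) = 1" using A ke
    by (metis of_real_eq_iff power_mult_distrib power_one)
  have B': "bloch_norm2 (rho_B psi) = kr^2 * er^2 - 4 * kr^2 * (cmod d)^2"
    using B of_real_eq_iff by (metis right_diff_distrib mult.assoc mult.left_commute)
  have C': "bloch_norm2 (rho_C psi) = bloch_norm2 (rho_B psi)"
    using B C of_real_eq_iff by metis
  have "kr^2 * er^2 = 1" using ke by (metis power_mult_distrib power_one)
  moreover have "0 \<le> 4 * kr^2 * (cmod d)^2" by simp
  ultimately show ?thesis using A' B' C' by linarith
qed


lemma prodB:
  assumes pure: "pure_state3 psi" and p: "product_B_AC psi"
  shows "bloch_norm2 (rho_B psi) = 1 \<and> bloch_norm2 (rho_A psi) = bloch_norm2 (rho_C psi)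
         \<and> bloch_norm2 (rho_A psi) \<le> 1"
proof -
  define q where "q = (\<lambda>a b c. psi b a c)"
  have "pure_state3 q" using pure unfolding pure_state3_def q_def UNIV_bool by simp
  moreover have "product_A_BC q" using p unfolding product_A_BC_def product_B_AC_def q_def by blast
  moreover have "rho_A q = rho_B psi" unfolding rho_A_def rho_B_def q_def by (intro ext) simp
  moreover have "rho_B q = rho_A psi" unfolding rho_A_def rho_B_def q_def by (intro ext) simp
  moreover have "rho_C q = rho_C psi" unfolding rho_C_def q_def UNIV_bool by (intro ext) simp
  ultimately show ?thesis using prodA by metis
qed

lemma prodC:
  assumes pure: "pure_state3 psi" and p: "product_C_AB psi"
  shows "bloch_norm2 (rho_C psi) = 1 \<and> bloch_norm2 (rho_A psi) = bloch_norm2 (rho_B psi)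
         \<and> bloch_norm2 (rho_A psi) \<le> 1"
proof -
  define q where "q = (\<lambda>a b c. psi b c a)"
  have "pure_state3 q" using pure unfolding pure_state3_def q_def UNIV_bool by simp
  moreover have "product_A_BC q" using p unfolding product_A_BC_def product_C_AB_def q_def by blast
  moreover have "rho_A q = rho_C psi" unfolding rho_A_def rho_C_def q_def UNIV_bool by (intro ext) simp
  moreover have "rho_B q = rho_A psi" unfolding rho_A_def rho_B_def q_def UNIV_bool by (intro ext) simp
  moreover have "rho_C q = rho_B psi" unfolding rho_B_def rho_C_def q_def UNIV_bool by (intro ext) simp
  ultimately show ?thesis using prodA by metis
qed

theorem theorem9:
  fixes psi :: qstate3
  assumes "pure_state3 psi"
  defines "a2 \<equiv> bloch_norm2 (rho_A psi)"
      and "b2 \<equiv> bloch_norm2 (rho_B psi)"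
      and "c2 \<equiv> bloch_norm2 (rho_C psi)"
  assumes "(a2 > (b2 + c2) / 2 \<and> b2 > (a2 + c2) / 2)
         \<or> (a2 > (b2 + c2) / 2 \<and> c2 > (a2 + b2) / 2)
         \<or> (b2 > (a2 + c2) / 2 \<and> c2 > (a2 + b2) / 2)"
  shows "genuinely_tripartite_entangled psi"
  unfolding genuinely_tripartite_entangled_def
proof (intro conjI notI)
  assume "product_A_BC psi"
  from prodA[OF assms(1) this] show False using assms(5) unfolding a2_def b2_def c2_def by argo
next
  assume "product_B_AC psi"
  from prodB[OF assms(1) this] show False using assms(5) unfolding a2_def b2_def c2_def by argo
next
  assume "product_C_AB psi"
  from prodC[OF assms(1) this] show False using assms(5) unfolding a2_def b2_def c2_def by argo
qed

end
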